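(* Let $\mathcal{C}$ be a clone on a finite set $A=\{1,\dots,t\}$ and let $(c,d)\in A^2$. Then $\lambda(\mathcal{C},(c,d))$ is an upward closed subset of $(A^+,\le_{\mathrm{E}})$, i.e. if $\mathbf{a}\in\lambda(\mathcal{C},(c,d))$ and $\mathbf{a}\le_{\mathrm{E}}\mathbf{b}$ then $\mathbf{b}\in\lambda(\mathcal{C},(c,d))$.
   Context: A clone on $A$ is a set of finitary operations on $A$ closed under composition and containing all projections; $\mathcal{C}^{[n]}$ is its set of $n$-ary members. $A^+=\bigcup_{n\ge1}A^n$. $<_{\mathrm{lex}}$ is the strict lexicographic order on $A^n$ induced by $1<\dots<t$. For $\mathbf{a}\in A^n$, $\varphi(\mathcal{C},\mathbf{a}):=\{(f(\mathbf{a}),g(\mathbf{a})) : f,g\in\mathcal{C}^{[n]},\ f(\mathbf{c})=g(\mathbf{c})\text{ for all }\mathbf{c}<_{\mathrm{lex}}\mathbf{a}\}$, and $\lambda(\mathcal{C},(c,d)):=\{\mathbf{a}\in A^+ : (c,d)\notin\varphi(\mathcal{C},\mathbf{a})\}$. $\mathrm{firstOcc}(\mathbf{a},b)$ is $0$ if $b$ does not occur in $\mathbf{a}$, otherwise the least $i$ with $a_i=b$; $(a_1,\dots,a_m)\le_{\mathrm{E}}(b_1,\dots,b_n)$ means there is a strictly increasing $h:\{1,\dots,m\}\to\{1,\dots,n\}$ with $a_i=b_{h(i)}$ for all $i$, $\{a_1,\dots,a_m\}=\{b_1,\dots,b_n\}$, and $h(\mathrm{firstOcc}(\mathbf{a},c))=\mathrm{firstOcc}(\mathbf{b},c)$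 for all $c\in\{a_1,\dots,a_m\}$. *)

theory Defs
  imports Main
begin

text \<open>The finite set A = {1..t}; tuples are lists (position i of the paper = index i-1).\<close>

definition tuples :: "nat \<Rightarrow> nat \<Rightarrow> nat list set" where
  "tuples t n = {xs. length xs = n \<and> set xs \<subseteq> {1..t}}"

definition Aplus :: "nat \<Rightarrow> nat list set" where
  "Aplus t = {xs. xs \<noteq> [] \<and> set xs \<subseteq> {1..t}}"

definition is_op :: "nat \<Rightarrow> nat \<Rightarrow> (nat list \<Rightarrow> nat) \<Rightarrow> bool" where
  "is_op t n f \<longleftrightarrow> (\<forall>xs\<in>tuples t n. f xs \<in> {1..t}) \<and>
                      (\<forall>xs. xs \<notin> tuples t n \<longrightarrow> f xs = undefined)"

definition is_clone :: "nat \<Rightarrow> (nat \<Rightarrow> (nat list \<Rightarrow> nat) set) \<Rightarrow> bool" where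
  "is_clone t C \<longleftrightarrow>
     (\<forall>n. C n \<subseteq> {f. is_op t n f}) \<and> C 0 = {} \<and>
     (\<forall>n i. 1 \<le> n \<longrightarrow> i < n \<longrightarrow>
        (\<lambda>xs. if xs \<in> tuples t n then xs ! i else undefined) \<in> C n) \<and>
     (\<forall>m n f gs. 1 \<le> n \<longrightarrow> f \<in> C m \<longrightarrow> length gs = m \<longrightarrow> set gs \<subseteq> C n \<longrightarrow>
        (\<lambda>xs. if xs \<in> tuples t n then f (map (\<lambda>g. g xs) gs) else undefined) \<in> C n)"

definition lex_less :: "nat list \<Rightarrow> nat list \<Rightarrow> bool" where
  "lex_less c a \<longleftrightarrow> length c = length a \<and>
     (\<exists>i<length a. take i c = take i a \<and> c ! i < a ! i)"

definition phi :: "nat \<Rightarrow> (nat \<Rightarrow> (nat list \<Rightarrow> nat) set) \<Rightarrow> nat list \<Rightarrow> (nat \<times> nat) set" where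
  "phi t C a = {(f a, g a) | f g. f \<in> C (length a) \<and> g \<in> C (length a) \<and>
       (\<forall>c\<in>tuples t (length a). lex_less c a \<longrightarrow> f c = g c)}"

definition lam :: "nat \<Rightarrow> (nat \<Rightarrow> (nat list \<Rightarrow> nat) set) \<Rightarrow> nat \<times> nat \<Rightarrow> nat list set" where
  "lam t C cd = {a \<in> Aplus t. cd \<notin> phi t C a}"

text \<open>1-based first occurrence, 0 if absent.\<close>
definition firstOcc :: "nat list \<Rightarrow> nat \<Rightarrow> nat" where
  "firstOcc a b = (if b \<in> set a then Suc (LEAST i. i < length a \<and> a ! i = b) else 0)"

definition E_le :: "nat list \<Rightarrow> nat list \<Rightarrow> bool" where
  "E_le a b \<longleftrightarrow> (\<exists>h :: nat \<Rightarrow> nat.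
      strict_mono_on {1..length a} h \<and> h ` {1..length a} \<subseteq> {1..length b} \<and>
      (\<forall>i\<in>{1..length a}. a ! (i - 1) = b ! (h i - 1)) \<and>
      set a = set b \<and>
      (\<forall>c\<in>set a. h (firstOcc a c) = firstOcc b c))"

end

theory Submission
  imports Defs
begin

theorem lemma5p2:
  fixes t :: nat and C :: "nat \<Rightarrow> (nat list \<Rightarrow> nat) set" and c d :: nat
    and a b :: "nat list"
  assumes "is_clone t C"
    and "c \<in> {1..t}" and "d \<in> {1..t}"
    and "a \<in> lam t C (c, d)"
    and "E_le a b"
  shows "b \<in> lam t C (c, d)"
proof -
  define m where "m = length a"
  define n where "n = length b"
  from assms(5) obtain h where hm: "strict_mono_on {1..m} h"
    and himg: "h ` {1..m} \<subseteq> {1..n}"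
    and hval: "\<forall>i\<in>{1..m}. a ! (i - 1) = b ! (h i - 1)"
    and sab: "set a = set b"
    and hfo: "\<forall>c\<in>set a. h (firstOcc a c) = firstOcc b c"
    unfolding E_le_def m_def n_def by blast
  have aA: "a \<in> Aplus t" and anot: "(c,d) \<notin> phi t C a" using assms(4) unfolding lam_def by auto
  have m1: "1 \<le> m" using aA unfolding Aplus_def m_def by (cases a) auto
  have bA: "b \<in> Aplus t" using aA sab unfolding Aplus_def by auto
  have hlt: "h (Suc i) < h (Suc k)" if "i < k" "k < m" for i k
    using hm that unfolding strict_mono_on_def by auto
  have hle: "i < k" if "h (Suc i) < h (Suc k)" "i < m" "k < m" for i k
    using hlt[of k i] that by (metis linorder_neqE_nat order_less_asym)
  have hinj: "i = k" if "h (Suc i) = h (Suc k)" "i < m" "k < m" for i k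
    using hlt[of i k] hlt[of k i] that by (cases i k rule: linorder_cases) auto
  have hrange: "1 \<le> h (Suc i) \<and> h (Suc i) \<le> n" if "i < m" for i
  proof -
    have "Suc i \<in> {1..m}" using that by simp
    then have "h (Suc i) \<in> {1..n}" using himg by blast
    then show ?thesis by simp
  qed
  have hv: "a ! i = b ! (h (Suc i) - 1)" if "i < m" for i
    using hval[rule_format, of "Suc i"] that by simp
  define s where "s j = (if \<exists>i<m. h (Suc i) = Suc j then (THE i. i<m \<and> h (Suc i) = Suc j)
        else (LEAST i. i<m \<and> a!i = b!j))" for j
  have P12: "s j < m \<and> a ! s j = b ! j" if "j < n" for j
  proof (cases "\<exists>i<m. h (Suc i) = Suc j")
    case True
    then obtain i where i: "i < m" "h (Suc i) = Suc j" by blast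
    have "(THE i. i<m \<and> h (Suc i) = Suc j) = i"
      using i hle by (intro the_equality) (auto intro: hinj)
    then show ?thesis using True i hv[of i] unfolding s_def by simp
  next
    case False
    have "b ! j \<in> set a" using sab that n_def by auto
    then obtain i where "i < m" "a ! i = b ! j" unfolding m_def by (auto simp: in_set_conv_nth)
    then have "(LEAST i. i<m \<and> a!i = b!j) < m \<and> a ! (LEAST i. i<m \<and> a!i = b!j) = b ! j"
      by (metis (mono_tags, lifting) LeastI)
    moreover have "s j = (LEAST i. i<m \<and> a!i = b!j)" using False unfolding s_def by (simp only: if_False)
    ultimately show ?thesis by simp
  qed
  have P3: "s (h (Suc i) - 1) = i" if "i < m" for i
  proof -
    have e: "Suc (h (Suc i) - 1) = h (Suc i)" using hrange[OF that] by simp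
    have "(THE k. k<m \<and> h (Suc k) = Suc (h (Suc i) - 1)) = i"
      unfolding e using that by (intro the_equality) (auto intro: hinj)
    then show ?thesis unfolding s_def using that e by auto
  qed
  have P4: "s j < k" if "j < h (Suc k) - 1" "k < m" for j k
  proof (cases "\<exists>i<m. h (Suc i) = Suc j")
    case True
    then obtain i where i: "i < m" "h (Suc i) = Suc j" by blast
    have "(THE i. i<m \<and> h (Suc i) = Suc j) = i"
      using i hle by (intro the_equality) (auto intro: hinj)
    moreover have "i < k" using hle[of i k] i that by simp
    ultimately show ?thesis using True unfolding s_def by simp
  next
    case False
    define v where "v = b ! j"
    have jn: "j < n" using that hrange[of k] by linarith
    have "v \<in> set a" using sab jn n_def v_def by auto
    define i where "i = (LEAST i. i<m \<and> a!i = v)"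
    have si: "s j = i" using False unfolding s_def i_def v_def by (simp only: if_False)
    have "firstOcc a v = Suc i" using \<open>v \<in> set a\<close> unfolding firstOcc_def i_def m_def by simp
    moreover have "firstOcc b v \<le> Suc j"
    proof -
      have "(LEAST l. l < length b \<and> b ! l = v) \<le> j"
        using jn n_def v_def by (intro Least_le) simp
      then show ?thesis using \<open>v \<in> set a\<close> sab unfolding firstOcc_def by simp
    qed
    ultimately have "h (Suc i) \<le> Suc j" using hfo \<open>v \<in> set a\<close> by metis
    moreover have "i < m" using P12[OF jn] si by simp
    ultimately show ?thesis using hlt[of k i] that si
      by (cases i k rule: linorder_cases) auto
  qed
  define p where "p x = map (\<lambda>j. x ! s j) [0..<n]" for x :: "nat list"
  have pa: "p a = b" unfolding p_def using P12 n_def by (intro nth_equalityI) auto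
  have ptup: "p x \<in> tuples t n" if "x \<in> tuples t m" for x
  proof -
    have "x ! s j \<in> {1..t}" if "j < n" for j
      using \<open>x \<in> tuples t m\<close> P12[OF that] unfolding tuples_def by (auto dest!: nth_mem)
    then show ?thesis unfolding tuples_def p_def by auto
  qed
  have plex: "lex_less (p x) b" if "x \<in> tuples t m" "lex_less x a" for x
  proof -
    from that obtain k where k: "k < m" "take k x = take k a" "x ! k < a ! k" "length x = m"
      unfolding lex_less_def m_def by auto
    define j0 where "j0 = h (Suc k) - 1"
    have j0n: "j0 < n" using hrange[OF k(1)] j0_def by linarith
    have "take j0 (p x) = take j0 b"
    proof (rule nth_equalityI)
      show "length (take j0 (p x)) = length (take j0 b)" using j0n n_def p_def by simp
    next
      fix j assume "j < length (take j0 (p x))"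
      then have j: "j < j0" "j < n" using p_def j0n by auto
      have sk: "s j < k" using P4 j k(1) j0_def by simp
      have "take k x ! s j = take k a ! s j" using k(2) by simp
      then have "x ! s j = a ! s j" using sk by simp
      then show "take j0 (p x) ! j = take j0 b ! j" using j P12[of j] p_def by simp
    qed
    moreover have "p x ! j0 < b ! j0"
      using j0n P3[OF k(1)] k hv[OF k(1)] unfolding p_def j0_def by simp
    moreover have "length (p x) = length b" using p_def n_def by simp
    ultimately show ?thesis unfolding lex_less_def using j0n n_def by auto
  qed
  have comp: "\<exists>f'\<in>C m. \<forall>x\<in>tuples t m. f' x = f (p x)" if "f \<in> C n" for f
  proof -
    define gs where "gs = map (\<lambda>j. (\<lambda>xs. if xs \<in> tuples t m then xs ! s j else undefined)) [0..<n]"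
    have proj: "\<forall>n i. 1 \<le> n \<longrightarrow> i < n \<longrightarrow>
        (\<lambda>xs. if xs \<in> tuples t n then xs ! i else undefined) \<in> C n"
      and cmp: "\<forall>m n f gs. 1 \<le> n \<longrightarrow> f \<in> C m \<longrightarrow> length gs = m \<longrightarrow> set gs \<subseteq> C n \<longrightarrow>
        (\<lambda>xs. if xs \<in> tuples t n then f (map (\<lambda>g. g xs) gs) else undefined) \<in> C n"
      using assms(1) unfolding is_clone_def by blast+
    have "set gs \<subseteq> C m"
    proof
      fix g assume "g \<in> set gs"
      then obtain j where "j < n" "g = (\<lambda>xs. if xs \<in> tuples t m then xs ! s j else undefined)"
        unfolding gs_def by auto
      then show "g \<in> C m" using proj m1 P12[of j] by blast
    qed
    moreover have "length gs = n" unfolding gs_def by simp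
    ultimately have "(\<lambda>xs. if xs \<in> tuples t m then f (map (\<lambda>g. g xs) gs) else undefined) \<in> C m"
      using cmp m1 that by blast
    moreover have "\<forall>x\<in>tuples t m. (if x \<in> tuples t m then f (map (\<lambda>g. g x) gs) else undefined) = f (p x)"
      unfolding gs_def p_def by (simp add: comp_def)
    ultimately show ?thesis
      by (intro bexI[of _ "\<lambda>xs. if xs \<in> tuples t m then f (map (\<lambda>g. g xs) gs) else undefined"]) simp_all
  qed
  show ?thesis
  proof (rule ccontr)
    assume "b \<notin> lam t C (c, d)"
    then have "(c,d) \<in> phi t C b" using bA unfolding lam_def by auto
    then obtain f g where fg: "f \<in> C n" "g \<in> C n" "c = f b" "d = g b"
      "\<forall>y\<in>tuples t n. lex_less y b \<longrightarrow> f y = g y"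
      unfolding phi_def n_def by auto
    obtain f' where f': "f' \<in> C m" "\<forall>x\<in>tuples t m. f' x = f (p x)" using comp fg(1) by blast
    obtain g' where g': "g' \<in> C m" "\<forall>x\<in>tuples t m. g' x = g (p x)" using comp fg(2) by blast
    have atup: "a \<in> tuples t m" using aA unfolding Aplus_def tuples_def m_def by auto
    have "(c,d) \<in> phi t C a"
      unfolding phi_def
      apply (rule CollectI, rule exI[of _ f'], rule exI[of _ g'])
    proof (intro conjI)
      show "(c, d) = (f' a, g' a)" using f' g' fg atup pa by simp
      show "f' \<in> C (length a)" "g' \<in> C (length a)" using f' g' m_def by simp_all
      show "\<forall>x\<in>tuples t (length a). lex_less x a \<longrightarrow> f' x = g' x"
      proof (intro ballI impI)
        fix x assume x: "x \<in> tuples t (length a)" "lex_less x a"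
        then have "x \<in> tuples t m" using m_def by simp
        then show "f' x = g' x" using f'(2) g'(2) fg(5) plex ptup x(2) by simp
      qed
    qed
    then show False using anot by simp
  qed
qed

end
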